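(* Let $W\in\mathbb{R}^{m\times n}$ have columns $w_1,\dots,w_n$, all nonzero, let $F:=WW^\top$ and $r:=\operatorname{rank}(W)=\operatorname{rank}(F)$. Define leverage scores $\ell_i:=w_i^\top F^+w_i$, fractional dimensionalities $D_i:=\|w_i\|^4/(w_i^\top Fw_i)$, and relative slack $\sigma_i:=1-D_i/\ell_i\in[0,1]$. Then: (1) $\sum_{i=1}^n\ell_i=r$; (2) $D_i\le\ell_i$ for all $i$, with equality iff the spectral measure $\mu_i$ is a Dirac mass, equivalently iff $w_i$ is an eigenvector of $F$; (3) $r-\sum_{i=1}^nD_i=\sum_{i=1}^n(\ell_i-D_i)=\sum_{i=1}^n\ell_i\sigma_i$; in particular, if $r=m$ then $m-\sum_iD_i=\sum_i\ell_i\sigma_i$.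
   Context: $F^+$ is the Moore–Penrose pseudoinverse of $F$. Writing $F=\sum_{k:\lambda_k>0}\lambda_kP_k$ on $\operatorname{Im}(F)$ with $P_k$ the orthogonal projectors onto the eigenspaces for distinct positive eigenvalues $\lambda_k$, the spectral measure of $w_i$ is $\mu_i:=\sum_{k}\frac{\|P_kw_i\|^2}{\|w_i\|^2}\delta_{\lambda_k}$. *)

theory Defs
  imports "HOL-Analysis.Analysis" "HOL-Probability.Giry_Monad"
begin

definition pinv :: "real^'n^'n \<Rightarrow> real^'n^'n" where
  "pinv A = (THE X. A ** X ** A = A \<and> X ** A ** X = X \<and>
                   transpose (A ** X) = A ** X \<and> transpose (X ** A) = X ** A)"

definition eigenspace :: "real^'n^'n \<Rightarrow> real \<Rightarrow> (real^'n) set" where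
  "eigenspace A lam = {v. A *v v = lam *\<^sub>R v}"

definition pos_eigenvalues :: "real^'n^'n \<Rightarrow> real set" where
  "pos_eigenvalues A = {lam. lam > 0 \<and> (\<exists>v. v \<noteq> 0 \<and> A *v v = lam *\<^sub>R v)}"

definition eig_proj :: "real^'n^'n \<Rightarrow> real \<Rightarrow> real^'n \<Rightarrow> real^'n" where
  "eig_proj A lam v = closest_point (eigenspace A lam) v"

definition spectral_measure :: "real^'n^'n \<Rightarrow> real^'n \<Rightarrow> real measure" where
  "spectral_measure A w = measure_of UNIV (sets borel)
     (\<lambda>S. ennreal (\<Sum>lam \<in> S \<inter> pos_eigenvalues A. (norm (eig_proj A lam w))^2 / (norm w)^2))"

definition leverage :: "real^'n^'m \<Rightarrow> 'n \<Rightarrow> real" where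
  "leverage W i = column i W \<bullet> (pinv (W ** transpose W) *v column i W)"

definition frac_dim :: "real^'n^'m \<Rightarrow> 'n \<Rightarrow> real" where
  "frac_dim W i = (norm (column i W))^4 / (column i W \<bullet> ((W ** transpose W) *v column i W))"

definition rel_slack :: "real^'n^'m \<Rightarrow> 'n \<Rightarrow> real" where
  "rel_slack W i = 1 - frac_dim W i / leverage W i"

end

theory Submission
  imports Defs
begin


lemma tr_dot: "(transpose A *v x) \<bullet> y = x \<bullet> ((A::real^'n^'m) *v y)"
  by (metis dot_lmul_matrix vector_transpose_matrix transpose_transpose)

lemma col_dot: "column i W \<bullet> v = (transpose (W::real^'n^'m) *v v) $ i"
  by (simp add: column_def inner_vec_def matrix_vector_mult_def transpose_def mult.commute)

lemma sym_crit:
  assumes "\<And>x y. (M *v x) \<bullet> y = x \<bullet> ((M::real^'n^'n) *v y)"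
  shows "transpose M = M"
proof -
  have "\<And>x. transpose M *v x = M *v x"
  proof -
    fix x
    have "\<And>y. (transpose M *v x - M *v x) \<bullet> y = 0"
      using assms tr_dot by (simp add: inner_diff_left)
    then show "transpose M *v x = M *v x"
      by (metis inner_eq_zero_iff eq_iff_diff_eq_0)
  qed
  then show ?thesis by (simp add: matrix_eq)
qed

lemma pinv_unique:
  fixes A X Y :: "real^'n^'n"
  assumes "A ** X ** A = A" "X ** A ** X = X" "transpose (A ** X) = A ** X" "transpose (X ** A) = X ** A"
  assumes "A ** Y ** A = A" "Y ** A ** Y = Y" "transpose (A ** Y) = A ** Y" "transpose (Y ** A) = Y ** A"
  shows "X = Y"
proof -
  have "X = X ** (A ** X)" using assms by (simp add: matrix_mul_assoc)
  also have "\<dots> = X ** transpose (A ** X)" using assms by simp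
  also have "\<dots> = X ** transpose X ** transpose A" by (simp add: matrix_transpose_mul matrix_mul_assoc)
  also have "\<dots> = X ** transpose X ** transpose (A ** Y ** A)" using assms by simp
  also have "\<dots> = X ** transpose (A ** X) ** transpose (A ** Y)" by (simp add: matrix_transpose_mul matrix_mul_assoc)
  also have "\<dots> = X ** A ** X ** A ** Y" using assms by (simp add: matrix_mul_assoc)
  also have "\<dots> = X ** A ** Y" using assms by (simp add: matrix_mul_assoc)
  finally have 1: "X = X ** A ** Y" .
  have "Y = (Y ** A) ** Y" using assms by (simp add: matrix_mul_assoc)
  also have "\<dots> = transpose (Y ** A) ** Y" using assms by simp
  also have "\<dots> = transpose A ** transpose Y ** Y" by (simp add: matrix_transpose_mul matrix_mul_assoc)
  also have "\<dots> = transpose (A ** X ** A) ** transpose Y ** Y" using assms by simp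
  also have "\<dots> = transpose (X ** A) ** transpose (Y ** A) ** Y" by (simp add: matrix_transpose_mul matrix_mul_assoc)
  also have "\<dots> = X ** A ** Y ** A ** Y" using assms by (simp add: matrix_mul_assoc)
  also have "\<dots> = X ** A ** Y" using assms(6) by (metis matrix_mul_assoc)
  finally show ?thesis using 1 by simp
qed



lemma pinv_struct:
  fixes W :: "real^'n^'m"
  defines "F \<equiv> W ** transpose W"
  obtains B where "finite B" "pairwise orthogonal B" "\<And>b. b\<in>B \<Longrightarrow> norm b = 1" "card B = rank F"
   "span B = range (\<lambda>x. F *v x)"
   "\<And>x. F *v (pinv F *v x) = (\<Sum>b\<in>B. (b \<bullet> x) *\<^sub>R b)"
   "\<And>x. pinv F *v (F *v x) = (\<Sum>b\<in>B. (b \<bullet> x) *\<^sub>R b)"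
   "range (\<lambda>x. W *v x) = range (\<lambda>x. F *v x)"
   "\<And>x. x \<in> range (\<lambda>x. W *v x) \<Longrightarrow> (\<Sum>b\<in>B. (b \<bullet> x) *\<^sub>R b) = x"
proof -
  define S where "S = range (\<lambda>x. F *v x)"
  have subS: "subspace S" unfolding S_def
    by (metis matrix_vector_mul_linear subspace_UNIV linear_subspace_image)
  obtain B where B: "B \<subseteq> S" "pairwise orthogonal B" "\<And>x. x \<in> B \<Longrightarrow> norm x = 1"
              "independent B" "card B = dim S" "span B = S"
    using orthonormal_basis_subspace[OF subS] by metis
  have finB: "finite B" using B(4) independent_imp_finite by blast
  define P where "P = (\<lambda>x. \<Sum>b\<in>B. (b \<bullet> x) *\<^sub>R b)"
  have bb: "b \<bullet> b = 1" if "b \<in> B" for b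
    using B(3)[OF that] by (simp add: dot_square_norm)
  have bc: "b \<bullet> c = 0" if "b \<in> B" "c \<in> B" "b \<noteq> c" for b c
    using B(2) that unfolding pairwise_def orthogonal_def by blast
  have P1: "b \<bullet> P x = b \<bullet> x" if "b \<in> B" for b x
  proof -
    have "b \<bullet> P x = (\<Sum>c\<in>B. (c \<bullet> x) * (b \<bullet> c))" unfolding P_def by (simp add: inner_sum_right)
    also have "\<dots> = (\<Sum>c\<in>B. if c = b then b \<bullet> x else 0)"
      by (rule sum.cong) (auto simp: bb bc that)
    also have "\<dots> = b \<bullet> x" using finB that by simp
    finally show ?thesis .
  qed
  have P2: "y \<bullet> (x - P x) = 0" if "y \<in> S" for x y
  proof -
    have "orthogonal (x - P x) y"
      by (rule orthogonal_to_span[of y B]) (use that B(6) P1 in \<open>simp_all add: orthogonal_def inner_diff_left, metis inner_commute\<close>)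
    then show ?thesis by (simp add: orthogonal_def inner_commute)
  qed
  have P3: "P x \<in> S" for x
    unfolding P_def B(6)[symmetric] by (intro span_sum span_scale span_base)
  have P4: "P x = x" if "x \<in> S" for x
  proof -
    have "(x - P x) \<bullet> (x - P x) = 0"
      using P2[OF that, of x] P2[OF P3, of x] by (simp add: inner_diff_left)
    then show ?thesis by simp
  qed
  have Psym: "P x \<bullet> y = x \<bullet> P y" for x y
    unfolding P_def by (simp add: inner_sum_left inner_sum_right inner_commute mult.commute)
  have linP: "linear P"
    unfolding P_def by (rule linearI) (simp_all add: inner_add_right scaleR_add_left sum.distrib scaleR_sum_right)
  have Fsym: "(F *v x) \<bullet> y = x \<bullet> (F *v y)" for x y
    by (metis tr_dot F_def matrix_transpose_mul transpose_transpose)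
  have FS: "F *v x \<in> S" for x unfolding S_def by simp
  have K1: "F *v (x - P x) = 0" for x
  proof -
    have "(F *v (x - P x)) \<bullet> y = 0" for y
      using Fsym[of "x - P x" y] P2[OF FS[of y], of x] by (metis inner_commute)
    then show ?thesis by (metis inner_eq_zero_iff)
  qed
  have WtF: "(transpose W *v v) \<bullet> (transpose W *v v) = v \<bullet> (F *v v)" for v
    using tr_dot[of W v "transpose W *v v"] by (simp only: F_def matrix_vector_mul_assoc)
  have K2: "transpose W *v (x - P x) = 0" for x
    using WtF[of "x - P x"] K1[of x] by simp
  have rW: "range (\<lambda>x. W *v x) = S"
  proof
    show "S \<subseteq> range (\<lambda>x. W *v x)" unfolding S_def F_def
      by (auto simp: matrix_vector_mul_assoc[symmetric])
    show "range (\<lambda>x. W *v x) \<subseteq> S"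
    proof clarify
      fix z
      define v where "v = W *v z"
      have "(v - P v) \<bullet> v = 0" unfolding v_def
        by (metis tr_dot K2 inner_zero_left v_def)
      moreover have "(v - P v) \<bullet> P v = 0" using P2[OF P3] by (simp add: inner_commute)
      ultimately have "(v - P v) \<bullet> (v - P v) = 0" by (simp add: inner_diff_right)
      then have "v = P v" by simp
      then show "W *v z \<in> S" using P3 v_def by metis
    qed
  qed
  define Q where "Q = (\<lambda>x. x - P x)"
  define G where "G = (\<lambda>x. F *v x + Q x)"
  have linQ: "linear Q" unfolding Q_def using linP by (intro linear_compose_sub linear_ident)
  have linG: "linear G" unfolding G_def using linQ by (intro linear_compose_add) auto
  have QF: "Q (F *v x) = 0" for x unfolding Q_def using P4[OF FS] by simp
  have FQ: "F *v Q x = 0" for x unfolding Q_def using K1 by simp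
  have PQ: "P (Q x) = 0" for x
  proof -
    have "(Q x) \<bullet> (P (Q x)) = 0" using P2[OF P3[of "Q x"], of x] unfolding Q_def by (metis inner_commute)
    moreover have "P (Q x) \<bullet> P (Q x) = Q x \<bullet> P (P (Q x))" by (rule Psym)
    moreover have "P (P (Q x)) = P (Q x)" using P4[OF P3] by simp
    ultimately show ?thesis by (simp add: inner_commute)
  qed
  have QQ: "Q (Q x) = Q x" for x using PQ unfolding Q_def by (simp add: Q_def)
  have injG: "inj G"
  proof -
    have "v = 0" if "G v = 0" for v
    proof -
      have e: "F *v v = - Q v" using that unfolding G_def by (simp add: eq_neg_iff_add_eq_0)
      have "(F *v v) \<bullet> (F *v v) = 0"
        using P2[OF FS, of v] e unfolding Q_def by (metis inner_minus_right inner_commute neg_equal_zero)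
      then have Fv: "F *v v = 0" by simp
      then have "Q v = 0" using e by simp
      then have "v = P v" unfolding Q_def by simp
      then obtain u where u: "v = F *v u" using P3 unfolding S_def by (metis imageE)
      have "v \<bullet> v = u \<bullet> (F *v v)" using Fsym u by metis
      then show "v = 0" using Fv by simp
    qed
    then show ?thesis using linG by (simp add: linear_injective_0)
  qed
  obtain g where g: "linear g" "\<And>x. g (G x) = x" "\<And>x. G (g x) = x"
    using linear_injective_isomorphism[OF linG injG] by metis
  define Xf where "Xf = (\<lambda>v. g v - Q v)"
  have linX: "linear Xf" unfolding Xf_def using g(1) linQ by (intro linear_compose_sub)
  define X where "X = matrix Xf"
  have Xv: "X *v v = Xf v" for v unfolding X_def using linX by (metis matrix_vector_mul(2))
  have QG: "Q (G x) = Q x" for x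
    unfolding G_def using linQ QF QQ by (simp add: linear_add)
  have Qg: "Q (g x) = Q x" for x using QG[of "g x"] g(3) by simp
  have GQ: "G (Q x) = Q x" for x unfolding G_def using FQ QQ by simp
  have gQ: "g (Q x) = Q x" for x using g(2)[of "Q x"] GQ by simp
  have FX: "F *v (X *v v) = P v" for v
  proof -
    have "F *v (X *v v) = F *v g v" unfolding Xv Xf_def using FQ by (simp add: matrix_vector_mult_diff_distrib)
    also have "\<dots> = G (g v) - Q (g v)" unfolding G_def by simp
    also have "\<dots> = P v" using g(3) Qg unfolding Q_def by simp
    finally show ?thesis .
  qed
  have XF: "X *v (F *v v) = P v" for v
  proof -
    have "X *v (F *v v) = g (F *v v)" unfolding Xv Xf_def using QF by simp
    also have "\<dots> = g (G v - Q v)" unfolding G_def by simp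
    also have "\<dots> = v - g (Q v)" using g(1,2) by (simp add: linear_diff)
    also have "\<dots> = P v" using gQ unfolding Q_def by simp
    finally show ?thesis .
  qed
  have QX: "Q (X *v v) = 0" for v unfolding Xv Xf_def using linQ Qg QQ by (simp add: linear_diff)
  have c1: "F ** X ** F = F"
    by (simp add: matrix_eq matrix_vector_mul_assoc[symmetric] FX P4[OF FS])
  have c2: "X ** F ** X = X"
  proof -
    have "P (X *v v) = X *v v" for v using QX[of v] unfolding Q_def by simp
    then show ?thesis by (simp add: matrix_eq matrix_vector_mul_assoc[symmetric] XF)
  qed
  have c3: "transpose (F ** X) = F ** X"
    by (rule sym_crit) (simp add: matrix_vector_mul_assoc[symmetric] FX Psym)
  have c4: "transpose (X ** F) = X ** F"
    by (rule sym_crit) (simp add: matrix_vector_mul_assoc[symmetric] XF Psym)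
  have pX: "pinv F = X"
    unfolding pinv_def
    by (rule the_equality) (use c1 c2 c3 c4 pinv_unique[of F X] in blast)+
  show ?thesis
  proof (rule that[of B])
    show "finite B" by (rule finB)
    show "pairwise orthogonal B" by (rule B(2))
    show "norm b = 1" if "b \<in> B" for b using B(3) that .
    show "card B = rank F" using B(5) rank_dim_range[of F] S_def by simp
    show "span B = range (\<lambda>x. F *v x)" using B(6) S_def by simp
    show "F *v (pinv F *v x) = (\<Sum>b\<in>B. (b \<bullet> x) *\<^sub>R b)" for x using FX pX P_def by simp
    show "pinv F *v (F *v x) = (\<Sum>b\<in>B. (b \<bullet> x) *\<^sub>R b)" for x using XF pX P_def by simp
    show "range (\<lambda>x. W *v x) = range (\<lambda>x. F *v x)" using rW S_def by simp
    show "(\<Sum>b\<in>B. (b \<bullet> x) *\<^sub>R b) = x" if "x \<in> range (\<lambda>x. W *v x)" for x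
      using P4 rW that P_def by simp
  qed
qed



lemma eigspace_subspace: "subspace (eigenspace (A::real^'m^'m) lam)"
  unfolding eigenspace_def subspace_def
  by (simp add: matrix_vector_right_distrib scaleR_add_right matrix_vector_mult_scaleR)

lemma eig_orth:
  fixes A :: "real^'m^'m"
  assumes sym: "\<And>x y. (A *v x) \<bullet> y = x \<bullet> (A *v y)"
    and "A *v u = lam *\<^sub>R u" "A *v v = mu *\<^sub>R v" "lam \<noteq> mu"
  shows "u \<bullet> v = 0"
proof -
  have "lam * (u \<bullet> v) = mu * (u \<bullet> v)"
    using sym[of u v] assms(2,3) by (simp only: inner_scaleR_left inner_scaleR_right)
  then show ?thesis using assms(4) by simp
qed

lemma pos_eig_finite:
  fixes A :: "real^'m^'m"
  assumes sym: "\<And>x y. (A *v x) \<bullet> y = x \<bullet> (A *v y)"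
  shows "finite (pos_eigenvalues A)"
proof -
  define E where "E = pos_eigenvalues A"
  define v where "v = (\<lambda>lam. SOME v. v \<noteq> 0 \<and> A *v v = lam *\<^sub>R v)"
  have v: "v lam \<noteq> 0 \<and> A *v v lam = lam *\<^sub>R v lam" if "lam \<in> E" for lam
  proof -
    have "lam \<in> pos_eigenvalues A" using that E_def by simp
    then obtain u where "u \<noteq> 0 \<and> A *v u = lam *\<^sub>R u" unfolding pos_eigenvalues_def by auto
    then show ?thesis unfolding v_def by (rule someI)
  qed
  have inj: "inj_on v E"
  proof (rule inj_onI)
    fix a b assume ab: "a \<in> E" "b \<in> E" "v a = v b"
    have "a *\<^sub>R v a = b *\<^sub>R v a" using v[OF ab(1)] v[OF ab(2)] ab(3) by metis
    then show "a = b" using v[OF ab(1)] by simp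
  qed
  have "pairwise orthogonal (v ` E)"
  proof (rule pairwiseI)
    fix x y assume xy: "x \<in> v ` E" "y \<in> v ` E" "x \<noteq> y"
    obtain a where a: "a \<in> E" "x = v a" using xy(1) by (rule imageE) simp
    obtain b where b: "b \<in> E" "y = v b" using xy(2) by (rule imageE) simp
    have "a \<noteq> b" using xy(3) a(2) b(2) by auto
    then show "orthogonal x y" unfolding orthogonal_def a(2) b(2)
      using eig_orth[OF sym, of "v a" a "v b" b] v[OF a(1)] v[OF b(1)] by simp
  qed
  moreover have "0 \<notin> v ` E" using v by force
  ultimately have "independent (v ` E)" by (rule pairwise_orthogonal_independent)
  then have "finite (v ` E)" by (rule independent_imp_finite)
  then have "finite E" using inj by (rule finite_imageD)
  then show ?thesis unfolding E_def .
qed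

lemma spec_emeasure:
  fixes A :: "real^'m^'m"
  assumes sym: "\<And>x y. (A *v x) \<bullet> y = x \<bullet> (A *v y)" and SB: "S \<in> sets borel"
  shows "emeasure (spectral_measure A w) S =
     ennreal (\<Sum>lam \<in> S \<inter> pos_eigenvalues A. (norm (eig_proj A lam w))^2 / (norm w)^2)"
proof -
  define E where "E = pos_eigenvalues A"
  define c where "c = (\<lambda>lam. (norm (eig_proj A lam w))^2 / (norm w)^2)"
  have finE: "finite E" using pos_eig_finite[OF sym] E_def by simp
  have c0: "0 \<le> c lam" for lam unfolding c_def by simp
  have mu: "ennreal (\<Sum>lam \<in> T \<inter> E. c lam) = (\<Sum>lam\<in>E. ennreal (c lam) * indicator T lam)" for T
  proof -
    have "(\<Sum>lam \<in> T \<inter> E. c lam) = (\<Sum>lam\<in>E. c lam * indicator T lam)"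
      using finE by (simp add: sum.inter_restrict Int_commute indicator_def if_distrib cong: if_cong)
    also have "ennreal \<dots> = (\<Sum>lam\<in>E. ennreal (c lam * indicator T lam))"
      using c0 by (simp add: sum_ennreal)
    also have "\<dots> = (\<Sum>lam\<in>E. ennreal (c lam) * indicator T lam)"
      by (rule sum.cong) (auto simp: indicator_def)
    finally show ?thesis .
  qed
  show ?thesis
    unfolding spectral_measure_def
  proof (rule emeasure_measure_of[OF refl])
    show "sets borel \<subseteq> Pow UNIV" by simp
    show "positive (sets (measure_of UNIV (sets borel) (\<lambda>S. ennreal (\<Sum>lam \<in> S \<inter> pos_eigenvalues A. (norm (eig_proj A lam w))^2 / (norm w)^2)))) (\<lambda>S. ennreal (\<Sum>lam \<in> S \<inter> pos_eigenvalues A. (norm (eig_proj A lam w))^2 / (norm w)^2))"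
      by (simp add: positive_def)
    show "S \<in> sets (measure_of UNIV (sets borel) (\<lambda>S. ennreal (\<Sum>lam \<in> S \<inter> pos_eigenvalues A. (norm (eig_proj A lam w))^2 / (norm w)^2)))"
      using SB by simp
    show "countably_additive (sets (measure_of UNIV (sets borel) (\<lambda>S. ennreal (\<Sum>lam \<in> S \<inter> pos_eigenvalues A. (norm (eig_proj A lam w))^2 / (norm w)^2)))) (\<lambda>S. ennreal (\<Sum>lam \<in> S \<inter> pos_eigenvalues A. (norm (eig_proj A lam w))^2 / (norm w)^2))"
    proof (rule countably_additiveI)
      fix F :: "nat \<Rightarrow> real set"
      assume "disjoint_family F"
      then have "(\<Sum>i. (\<Sum>lam\<in>E. ennreal (c lam) * indicator (F i) lam)) = (\<Sum>lam\<in>E. ennreal (c lam) * indicator (\<Union>i. F i) lam)"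
        by (subst suminf_sum) (auto intro: summableI simp: suminf_indicator)
      then show "(\<Sum>i. ennreal (\<Sum>lam \<in> F i \<inter> pos_eigenvalues A. (norm (eig_proj A lam w))^2 / (norm w)^2)) = ennreal (\<Sum>lam \<in> (\<Union>i. F i) \<inter> pos_eigenvalues A. (norm (eig_proj A lam w))^2 / (norm w)^2)"
        using mu unfolding c_def E_def by simp
    qed
  qed
qed


lemma proj_facts:
  fixes A :: "real^'m^'m" and lam :: real and w :: "real^'m"
  defines "V \<equiv> eigenspace A lam"
  shows "closed V" "convex V" "0 \<in> V" "eig_proj A lam w \<in> V"
    "(w - eig_proj A lam w) \<bullet> eig_proj A lam w = 0"
proof -
  have sV: "subspace V" unfolding V_def by (rule eigspace_subspace)
  show cV: "closed V" using sV by (rule closed_subspace)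
  show cvV: "convex V" using sV by (rule subspace_imp_convex)
  show zV: "0 \<in> V" using sV by (rule subspace_0)
  show pV: "eig_proj A lam w \<in> V" unfolding eig_proj_def V_def[symmetric]
    using cV zV closest_point_in_set by blast
  define p where "p = eig_proj A lam w"
  have "(w - p) \<bullet> (0 - p) \<le> 0" using closest_point_dot[OF cvV cV zV, of w]
    unfolding p_def eig_proj_def V_def by simp
  moreover have "2 *\<^sub>R p \<in> V" using sV pV p_def by (simp add: subspace_scale)
  then have "(w - p) \<bullet> (2 *\<^sub>R p - p) \<le> 0" using closest_point_dot[OF cvV cV, of "2 *\<^sub>R p" w]
    unfolding p_def eig_proj_def V_def by simp
  ultimately show "(w - eig_proj A lam w) \<bullet> eig_proj A lam w = 0"
    unfolding p_def[symmetric] by (simp add: algebra_simps)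
qed

lemma spec_dirac:
  fixes A :: "real^'m^'m"
  assumes sym: "\<And>x y. (A *v x) \<bullet> y = x \<bullet> (A *v y)" and w0: "w \<noteq> 0"
    and pos: "\<And>lam. A *v w = lam *\<^sub>R w \<Longrightarrow> lam > 0"
  shows "(\<exists>lam. spectral_measure A w = return borel lam) \<longleftrightarrow> (\<exists>lam. A *v w = lam *\<^sub>R w)"
proof
  define E where "E = pos_eigenvalues A"
  define c where "c = (\<lambda>lam. (norm (eig_proj A lam w))^2 / (norm w)^2)"
  assume "\<exists>lam. spectral_measure A w = return borel lam"
  then obtain lam where h: "spectral_measure A w = return borel lam" by blast
  have "emeasure (spectral_measure A w) {lam} = 1" unfolding h by simp
  then have e: "ennreal (\<Sum>mu\<in>{lam} \<inter> E. c mu) = 1"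
    using spec_emeasure[OF sym, of "{lam}" w] unfolding c_def E_def by simp
  have lE: "lam \<in> E"
  proof (rule ccontr)
    assume "lam \<notin> E" then have "{lam} \<inter> E = {}" by blast
    then show False using e by simp
  qed
  then have "{lam} \<inter> E = {lam}" by blast
  then have "c lam = 1" using e by simp
  then have nn: "(norm (eig_proj A lam w))^2 = (norm w)^2" unfolding c_def using w0 by (simp add: divide_eq_1_iff)
  define p where "p = eig_proj A lam w"
  have o: "(w - p) \<bullet> p = 0" unfolding p_def by (rule proj_facts)
  have "w \<bullet> w = (w - p) \<bullet> (w - p) + p \<bullet> p" using o by (simp add: algebra_simps inner_commute)
  moreover have "w \<bullet> w = p \<bullet> p" using nn unfolding p_def by (simp add: power2_norm_eq_inner)
  ultimately have "(w - p) \<bullet> (w - p) = 0" by simp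
  then have "w = p" by simp
  then have "w \<in> eigenspace A lam" using proj_facts(4)[of A lam w] p_def by simp
  then show "\<exists>lam. A *v w = lam *\<^sub>R w" unfolding eigenspace_def by blast
next
  define E where "E = pos_eigenvalues A"
  define c where "c = (\<lambda>lam. (norm (eig_proj A lam w))^2 / (norm w)^2)"
  have finE: "finite E" using pos_eig_finite[OF sym] E_def by simp
  assume "\<exists>lam. A *v w = lam *\<^sub>R w"
  then obtain lam where ev: "A *v w = lam *\<^sub>R w" by blast
  have lE: "lam \<in> E" using pos[OF ev] ev w0 unfolding E_def pos_eigenvalues_def by blast
  have cl: "c mu = (if mu = lam then 1 else 0)" if "mu \<in> E" for mu
  proof (cases "mu = lam")
    case True
    have "w \<in> eigenspace A lam" using ev unfolding eigenspace_def by simp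
    then have "eig_proj A lam w = w" unfolding eig_proj_def by (rule closest_point_self)
    then show ?thesis using True w0 unfolding c_def by simp
  next
    case False
    have "0 = closest_point (eigenspace A mu) w"
    proof (rule closest_point_unique)
      show "convex (eigenspace A mu)" "closed (eigenspace A mu)" "0 \<in> eigenspace A mu"
        using proj_facts by blast+
      show "\<forall>z\<in>eigenspace A mu. dist w 0 \<le> dist w z"
      proof
        fix z assume "z \<in> eigenspace A mu"
        then have "w \<bullet> z = 0" using eig_orth[OF sym ev, of z mu] False unfolding eigenspace_def by auto
        then have "(w - z) \<bullet> (w - z) = w \<bullet> w + z \<bullet> z" by (simp add: algebra_simps inner_commute)
        then have "norm w ^ 2 \<le> norm (w - z) ^ 2" by (simp add: power2_norm_eq_inner)
        then show "dist w 0 \<le> dist w z" by (simp add: dist_norm power2_le_iff_abs_le[symmetric] abs_le_square_iff)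
      qed
    qed
    then show ?thesis using False unfolding c_def eig_proj_def by (metis norm_zero zero_power2 div_0)
  qed
  have sumS: "(\<Sum>mu\<in>S \<inter> E. c mu) = indicator S lam" for S
  proof -
    have "(\<Sum>mu\<in>S \<inter> E. c mu) = (\<Sum>mu\<in>S \<inter> E. if mu = lam then 1 else 0)"
      using cl by (intro sum.cong) auto
    also have "\<dots> = indicator S lam" using finE lE by (simp add: indicator_def)
    finally show ?thesis .
  qed
  have "spectral_measure A w = measure_of UNIV (sets borel) (\<lambda>S. indicator S lam)"
    unfolding spectral_measure_def using sumS unfolding c_def E_def by (simp add: ennreal_indicator)
  also have "\<dots> = return borel lam" unfolding return_def by simp
  finally show "\<exists>lam. spectral_measure A w = return borel lam" by blast
qed



lemma trace_lev:
  fixes W :: "real^'n^'m" and X :: "real^'m^'m"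
  shows "(\<Sum>i\<in>UNIV. column i W \<bullet> (X *v column i W)) = trace (X ** (W ** transpose W))"
proof -
  have "(transpose W ** (X ** W)) $ i $ i = column i W \<bullet> (X *v column i W)" for i
    by (simp add: matrix_matrix_mult_def transpose_def column_def inner_vec_def matrix_vector_mult_def)
  then have "(\<Sum>i\<in>UNIV. column i W \<bullet> (X *v column i W)) = trace (transpose W ** (X ** W))"
    by (simp add: trace_def)
  also have "\<dots> = trace ((X ** W) ** transpose W)" by (rule trace_mul_sym)
  also have "\<dots> = trace (X ** (W ** transpose W))" by (simp add: matrix_mul_assoc)
  finally show ?thesis .
qed

lemma trace_proj:
  fixes M :: "real^'m^'m"
  assumes "finite B" "\<And>b. b \<in> B \<Longrightarrow> norm b = 1"
    and "\<And>x. M *v x = (\<Sum>b\<in>B. (b \<bullet> x) *\<^sub>R b)"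
  shows "trace M = real (card B)"
proof -
  have "M $ k $ k = (\<Sum>b\<in>B. b $ k * b $ k)" for k
  proof -
    have "M $ k $ k = (M *v axis k 1) $ k" by (simp add: matrix_vector_mult_basis column_def)
    also have "\<dots> = (\<Sum>b\<in>B. b $ k * b $ k)" using assms(3) by (simp add: inner_axis)
    finally show ?thesis .
  qed
  then have "trace M = (\<Sum>k\<in>UNIV. \<Sum>b\<in>B. b $ k * b $ k)" by (simp add: trace_def)
  also have "\<dots> = (\<Sum>b\<in>B. b \<bullet> b)" by (subst sum.swap) (simp add: inner_vec_def)
  also have "\<dots> = (\<Sum>b\<in>B. 1)" using assms(2) by (intro sum.cong) (auto simp: dot_square_norm)
  finally show ?thesis by simp
qed



theorem mainTheorem17:
  fixes W :: "real^'n^'m"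
  assumes nonzero: "\<And>i. column i W \<noteq> 0"
  defines "F \<equiv> W ** transpose W"
  defines "r \<equiv> rank W"
  shows "rank F = r
    \<and> (\<forall>i. 0 \<le> rel_slack W i \<and> rel_slack W i \<le> 1)
    \<and> ((\<Sum>i\<in>UNIV. leverage W i) = real r)
    \<and> (\<forall>i. frac_dim W i \<le> leverage W i)
    \<and> (\<forall>i. (frac_dim W i = leverage W i \<longleftrightarrow>
               (\<exists>lam. spectral_measure F (column i W) = return (borel :: real measure) lam)) \<and>
             ((\<exists>lam. spectral_measure F (column i W) = return (borel :: real measure) lam) \<longleftrightarrow>
               (\<exists>lam. F *v column i W = lam *\<^sub>R column i W)))
    \<and> (real r - (\<Sum>i\<in>UNIV. frac_dim W i) = (\<Sum>i\<in>UNIV. leverage W i - frac_dim W i))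
    \<and> ((\<Sum>i\<in>UNIV. leverage W i - frac_dim W i) = (\<Sum>i\<in>UNIV. leverage W i * rel_slack W i))
    \<and> ((r = CARD('m) \<longrightarrow>
           real CARD('m) - (\<Sum>i\<in>UNIV. frac_dim W i) = (\<Sum>i\<in>UNIV. leverage W i * rel_slack W i)))"
proof -
  have Fd: "F = W ** transpose W" by (simp add: F_def)
  obtain B where B: "finite B" "pairwise orthogonal B" "\<And>b. b\<in>B \<Longrightarrow> norm b = 1" "card B = rank F"
   "span B = range (\<lambda>x. F *v x)"
   "\<And>x. F *v (pinv F *v x) = (\<Sum>b\<in>B. (b \<bullet> x) *\<^sub>R b)"
   "\<And>x. pinv F *v (F *v x) = (\<Sum>b\<in>B. (b \<bullet> x) *\<^sub>R b)"
   "range (\<lambda>x. W *v x) = range (\<lambda>x. F *v x)"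
   "\<And>x. x \<in> range (\<lambda>x. W *v x) \<Longrightarrow> (\<Sum>b\<in>B. (b \<bullet> x) *\<^sub>R b) = x"
    by (rule pinv_struct[of W, folded Fd]) blast
  define X where "X = pinv F"
  have rankFW: "rank F = r"
    unfolding r_def using B(8) by (simp add: rank_dim_range)
  have Fsym: "(F *v x) \<bullet> y = x \<bullet> (F *v y)" for x y
    by (metis tr_dot Fd matrix_transpose_mul transpose_transpose)
  have lev: "leverage W i = column i W \<bullet> (X *v column i W)" for i
    unfolding leverage_def X_def Fd ..
  have fd: "frac_dim W i = (norm (column i W))^4 / (column i W \<bullet> (F *v column i W))" for i
    unfolding frac_dim_def Fd ..
  have sumlev: "(\<Sum>i\<in>UNIV. leverage W i) = real r"
  proof -
    have "(\<Sum>i\<in>UNIV. leverage W i) = trace (X ** F)"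
      unfolding lev Fd by (rule trace_lev)
    also have "\<dots> = real (card B)"
    proof (rule trace_proj[OF B(1) B(3)])
      fix x
      have "(X ** F) *v x = X *v (F *v x)" by (simp add: matrix_vector_mul_assoc)
      then show "(X ** F) *v x = (\<Sum>b\<in>B. (b \<bullet> x) *\<^sub>R b)" using B(7) X_def by simp
    qed
    finally show ?thesis using B(4) rankFW by simp
  qed
  have each: "0 < frac_dim W i \<and> frac_dim W i \<le> leverage W i
     \<and> (frac_dim W i = leverage W i \<longleftrightarrow> (\<exists>lam. F *v column i W = lam *\<^sub>R column i W))
     \<and> (\<forall>lam. F *v column i W = lam *\<^sub>R column i W \<longrightarrow> lam > 0)" for i
  proof -
    define w where "w = column i W"
    have w0: "w \<noteq> 0" using nonzero w_def by simp
    have wr: "w \<in> range (\<lambda>x. W *v x)" unfolding w_def by (metis matrix_vector_mult_basis rangeI)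
    have FXw: "F *v (X *v w) = w" using B(6) B(9)[OF wr] X_def by simp
    have XFw: "X *v (F *v w) = w" using B(7) B(9)[OF wr] X_def by simp
    define a where "a = transpose W *v w"
    have WWt: "W *v (transpose W *v y) = F *v y" for y unfolding Fd by (rule matrix_vector_mul_assoc)
    define b where "b = transpose W *v (X *v w)"
    have ab: "a \<bullet> b = w \<bullet> w"
      using tr_dot[of W w "transpose W *v (X *v w)"] FXw
      unfolding a_def b_def by (simp only: WWt)
    have aa: "a \<bullet> a = w \<bullet> (F *v w)"
      using tr_dot[of W w "transpose W *v w"]
      unfolding a_def by (simp only: WWt)
    have bb: "b \<bullet> b = w \<bullet> (X *v w)"
      using tr_dot[of W "X *v w" "transpose W *v (X *v w)"] FXw
      unfolding b_def by (simp only: WWt inner_commute)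
    have wwp: "w \<bullet> w > 0" using w0 by simp
    have abp: "a \<bullet> b > 0" using ab wwp by simp
    then have a0: "a \<noteq> 0" and b0: "b \<noteq> 0" by auto
    have aap: "a \<bullet> a > 0" and bbp: "b \<bullet> b > 0" using a0 b0 by auto
    have n4: "norm w ^ 4 = (a \<bullet> b)^2"
      using ab by (simp add: power2_norm_eq_inner[symmetric] flip: power_mult)
    have D: "frac_dim W i = (a \<bullet> b)^2 / (a \<bullet> a)" using fd n4 aa w_def by simp
    have L: "leverage W i = b \<bullet> b" using lev bb w_def by simp
    have CS: "(a \<bullet> b)^2 \<le> (a \<bullet> a) * (b \<bullet> b)"
      by (rule Cauchy_Schwarz_ineq)
    have Dpos: "0 < frac_dim W i" using D abp aap by simp
    have DleL: "frac_dim W i \<le> leverage W i" using D L CS aap by (simp add: divide_le_eq mult.commute)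
    have posl: "lam > 0" if ev: "F *v w = lam *\<^sub>R w" for lam
    proof -
      have "a \<bullet> a = lam * (w \<bullet> w)" using aa ev by simp
      then show ?thesis using aap wwp by (simp add: zero_less_mult_iff)
    qed
    have eq: "frac_dim W i = leverage W i \<longleftrightarrow> (\<exists>lam. F *v w = lam *\<^sub>R w)"
    proof
      assume "frac_dim W i = leverage W i"
      then have "(a \<bullet> b)^2 = (a \<bullet> a) * (b \<bullet> b)" using D L aap by (simp add: divide_eq_eq mult.commute)
      also have "\<dots> = (norm a * norm b)^2" by (simp add: power_mult_distrib power2_norm_eq_inner)
      finally have "a \<bullet> b = norm a * norm b" using abp
        by (metis power2_eq_iff_nonneg less_imp_le norm_ge_zero zero_le_mult_iff)
      then have "norm a *\<^sub>R b = norm b *\<^sub>R a" by (simp add: norm_cauchy_schwarz_eq)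
      then have "W *v (norm a *\<^sub>R b) = W *v (norm b *\<^sub>R a)" by simp
      moreover have Wa: "W *v a = F *v w" unfolding a_def by (rule WWt)
      moreover have Wb: "W *v b = w" unfolding b_def using WWt FXw by simp
      ultimately have "norm a *\<^sub>R w = norm b *\<^sub>R (F *v w)"
        by (simp only: matrix_vector_mult_scaleR)
      then have "F *v w = (norm a / norm b) *\<^sub>R w" using b0
        by (metis (no_types, lifting) divide_inverse_commute norm_eq_zero scaleR_scaleR
            inverse_eq_divide right_inverse scaleR_one vector_fraction_eq_iff)
      then show "\<exists>lam. F *v w = lam *\<^sub>R w" by blast
    next
      assume "\<exists>lam. F *v w = lam *\<^sub>R w"
      then obtain lam where ev: "F *v w = lam *\<^sub>R w" by blast
      have lp: "lam > 0" by (rule posl[OF ev])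
      have "w = lam *\<^sub>R (X *v w)" using XFw ev by (simp add: matrix_vector_mult_scaleR)
      then have "(1 / lam) *\<^sub>R w = ((1 / lam) * lam) *\<^sub>R (X *v w)" by (metis scaleR_scaleR)
      then have Xw: "X *v w = (1 / lam) *\<^sub>R w" using lp by simp
      have L2: "leverage W i = (w \<bullet> w) / lam" using lev Xw w_def by simp
      have D2: "frac_dim W i = (w \<bullet> w)^2 / (lam * (w \<bullet> w))"
        using fd ev w_def n4 ab by simp
      show "frac_dim W i = leverage W i" using L2 D2 wwp lp by (simp add: power2_eq_square)
    qed
    show ?thesis using Dpos DleL eq posl w_def by blast
  qed
  have dirac: "(\<exists>lam. spectral_measure F (column i W) = return (borel :: real measure) lam) \<longleftrightarrow>
               (\<exists>lam. F *v column i W = lam *\<^sub>R column i W)" for i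
    by (rule spec_dirac[OF Fsym nonzero]) (use each in blast)
  have ls: "leverage W i * rel_slack W i = leverage W i - frac_dim W i" for i
    using each[of i] unfolding rel_slack_def by (simp add: field_simps)
  have rs: "0 \<le> rel_slack W i \<and> rel_slack W i \<le> 1" for i
    using each[of i] unfolding rel_slack_def by (simp add: field_simps)
  have s1: "real r - (\<Sum>i\<in>UNIV. frac_dim W i) = (\<Sum>i\<in>UNIV. leverage W i - frac_dim W i)"
    using sumlev by (simp add: sum_subtractf)
  have s2: "(\<Sum>i\<in>UNIV. leverage W i - frac_dim W i) = (\<Sum>i\<in>UNIV. leverage W i * rel_slack W i)"
    using ls by simp
  show ?thesis
    using rankFW rs sumlev each dirac s1 s2 by auto
qed

end
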